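(* Let $\theta,\theta_1>0$ and let $D_n=\lambda^{-1}\sum_{j=0}^{n-1}\big(-N+\sum_{i=1}^MN_i(t_j-h_i)\big)$. Assume that for all $i=1,\dots,M$ and all $0<n\le n_T$, $$\Big|\lambda^{-1}\sum_{j=-n_i}^{0\wedge(n-n_i)}(N_i(t_j)-p_iN)\Big|<\theta_1 .$$ Then $$\mathbb{P}\Big(\sup_{0<n\le n_T}|D_n|\ge M\theta+M\theta_1\Big)\le 2M\exp\Big(-\frac{\theta^2}{32T\epsilon}\Big).$$
   Context: Fix $\epsilon>0$, an integer $N\ge1$, $\lambda:=N/\epsilon$, $t_n:=n\epsilon$, $T>0$ with $n_T:=T\epsilon^{-1}$ an integer. Fix $M\ge1$, positive reals $h_1<\dots<h_M$ each an integer multiple of $\epsilon$, $n_i:=h_i/\epsilon$, and probabilities $p_1,\dots,p_M>0$ summing to $1$. At each time $t_n$ exactly $N$ vertices arrive, each independently of Type $i$ with probability $p_i$; $N_i(t_n)$ is the number of Type $i$ arrivals at $t_n$, so for $n\ge0$ the vectors $(N_1(t_n),\dots,N_M(t_n))$ are independent multinomial$(N;p_1,\dots,p_M)$ (in particular $N_i(t_n)\sim\mathrm{Binomial}(N,p_i)$, $\sum_iN_i(t_n)=N$). For $n<0$ the values $N_i(t_n)$ are given initial data. *)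

theory Defs
  imports "HOL-Probability.Probability"
begin

definition type_pmf :: "nat \<Rightarrow> (nat \<Rightarrow> real) \<Rightarrow> nat pmf" where
  "type_pmf M p = embed_pmf (\<lambda>i. if i \<in> {1..M} then p i else 0)"

text \<open>Outcome omega (n,k) = type of the k-th vertex arriving at t_n.
  (Arrivals at times t_n with n >= n_T never enter the statement.)\<close>
definition arrival_space :: "nat \<Rightarrow> nat \<Rightarrow> nat \<Rightarrow> (nat \<Rightarrow> real) \<Rightarrow> (nat \<times> nat \<Rightarrow> nat) pmf" where
  "arrival_space nT N M p = Pi_pmf ({0..<nT} \<times> {0..<N}) 0 (\<lambda>_. type_pmf M p)"

definition Ncount :: "nat \<Rightarrow> (nat \<Rightarrow> int \<Rightarrow> nat) \<Rightarrow> (nat \<times> nat \<Rightarrow> nat) \<Rightarrow> nat \<Rightarrow> int \<Rightarrow> nat" where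
  "Ncount N init \<omega> i n =
     (if n < 0 then init i n else card {k. k < N \<and> \<omega> (nat n, k) = i})"

text \<open>D_n = lambda^{-1} sum_{j=0}^{n-1} (-N + sum_i N_i(t_j - h_i)), with t_j - h_i = t_{j - n_i}.\<close>
definition Dproc :: "real \<Rightarrow> nat \<Rightarrow> nat \<Rightarrow> (nat \<Rightarrow> nat) \<Rightarrow> (nat \<Rightarrow> int \<Rightarrow> nat)
    \<Rightarrow> (nat \<times> nat \<Rightarrow> nat) \<Rightarrow> nat \<Rightarrow> real" where
  "Dproc \<epsilon> N M nn init \<omega> n =
     inverse (real N / \<epsilon>) *
       (\<Sum>j<n. - real N + (\<Sum>i=1..M. real (Ncount N init \<omega> i (int j - int (nn i)))))"

end

theory Submission
  imports Defs
begin

lemma pmf_type: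
  assumes p_pos: "\<And>i. i \<in> {1..M} \<Longrightarrow> p i > 0" and p_sum: "(\<Sum>i=1..M. p i) = 1"
  shows "pmf (type_pmf M p) x = (if x \<in> {1..M} then p x else 0)"
  unfolding type_pmf_def
proof (rule pmf_embed_pmf)
  show "\<And>x. 0 \<le> (if x \<in> {1..M} then p x else 0)" using p_pos by (simp add: less_imp_le)
  have "(\<integral>\<^sup>+x. ennreal (if x \<in> {1..M} then p x else 0) \<partial>count_space UNIV)
        = (\<Sum>x\<in>{1..M}. ennreal (if x \<in> {1..M} then p x else 0))"
    by (rule nn_integral_count_space') auto
  also have "\<dots> = ennreal (\<Sum>x\<in>{1..M}. p x)"
    using p_pos by (subst sum_ennreal[symmetric]) (auto simp: less_imp_le)
  finally show "(\<integral>\<^sup>+x. ennreal (if x \<in> {1..M} then p x else 0) \<partial>count_space UNIV) = 1"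
    using p_sum by simp
qed

lemma maxineq:
  fixes xs :: "'a list" and g :: "'b \<Rightarrow> real" and q :: "'b pmf"
  assumes "distinct xs" "set xs \<subseteq> A" "finite A" and l: "l \<ge> 0" and B: "B \<ge> 1"
    and hq: "(\<integral>\<^sup>+y. ennreal (exp (l * g y)) \<partial>q) \<le> ennreal B"
  shows "emeasure (measure_pmf (Pi_pmf A d (\<lambda>_. q)))
          {\<omega>. \<exists>n\<in>Ns. a \<le> x + (\<Sum>u\<in>set (take n xs). g (\<omega> u))}
         \<le> ennreal (exp (l*(x-a)) * B ^ length xs)"
  using assms(1,2,3)
proof (induction xs arbitrary: A Ns x)
  case Nil
  show ?case
  proof (cases "a \<le> x")
    case True
    have "emeasure (measure_pmf (Pi_pmf A d (\<lambda>_. q)))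
          {\<omega>. \<exists>n\<in>Ns. a \<le> x + (\<Sum>u\<in>set (take n []). g (\<omega> u))} \<le> 1"
      by (rule measure_pmf.emeasure_le_1)
    also have "1 \<le> ennreal (exp (l*(x-a)) * B ^ length [])"
      using True l by simp
    finally show ?thesis .
  next
    case False
    then show ?thesis by simp
  qed
next
  case (Cons v xs)
  define A' where "A' = A - {v}"
  have A: "A = insert v A'" "finite A'" "v \<notin> A'" "set xs \<subseteq> A'" "distinct xs" "v \<notin> set xs"
    using Cons.prems by (auto simp: A'_def)
  have P: "Pi_pmf A d (\<lambda>_. q) = bind_pmf q (\<lambda>y. map_pmf (\<lambda>f. f(v:=y)) (Pi_pmf A' d (\<lambda>_. q)))"
    unfolding A(1) using A by (subst Pi_pmf_insert') (auto simp: map_pmf_def)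
  let ?E = "{\<omega>. \<exists>n\<in>Ns. a \<le> x + (\<Sum>u\<in>set (take n (v#xs)). g (\<omega> u))}"
  show ?case
  proof (cases "0 \<in> Ns \<and> a \<le> x")
    case True
    have "emeasure (measure_pmf (Pi_pmf A d (\<lambda>_. q))) ?E \<le> 1"
      by (rule measure_pmf.emeasure_le_1)
    also have "1 \<le> ennreal (exp (l*(x-a)) * B ^ length (v#xs))"
    proof -
      have h1: "1 \<le> exp (l*(x-a))" using True l by simp
      have h2: "1 \<le> B ^ length (v#xs)" using B by (rule one_le_power)
      show ?thesis using mult_mono[OF h1 h2] by simp
    qed
    finally show ?thesis .
  next
    case False
    define Ns' where "Ns' = {m. Suc m \<in> Ns}"
    have seteq: "(\<lambda>f. f(v:=y)) -` ?E = {\<omega>. \<exists>n\<in>Ns'. a \<le> (x + g y) + (\<Sum>u\<in>set (take n xs). g (\<omega> u))}" for y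
    proof -
      have s: "(\<Sum>u\<in>set (take m xs). g ((f(v:=y)) u)) = (\<Sum>u\<in>set (take m xs). g (f u))" for f m
        using A(6) by (intro sum.cong) (auto dest: in_set_takeD)
      have "f(v:=y) \<in> ?E \<longleftrightarrow> (\<exists>m\<in>Ns'. a \<le> (x + g y) + (\<Sum>u\<in>set (take m xs). g (f u)))" for f
      proof
        assume "f(v:=y) \<in> ?E"
        then obtain n where n: "n \<in> Ns" "a \<le> x + (\<Sum>u\<in>set (take n (v#xs)). g ((f(v:=y)) u))" by auto
        then obtain m where m: "n = Suc m" using False by (cases n) auto
        have "v \<notin> set (take m xs)" using A(6) by (auto dest: in_set_takeD)
        then have "(\<Sum>u\<in>set (take n (v#xs)). g ((f(v:=y)) u)) = g y + (\<Sum>u\<in>set (take m xs). g (f u))"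
          using m s by simp
        then show "\<exists>m\<in>Ns'. a \<le> (x + g y) + (\<Sum>u\<in>set (take m xs). g (f u))"
          using n m by (auto simp: Ns'_def)
      next
        assume "\<exists>m\<in>Ns'. a \<le> (x + g y) + (\<Sum>u\<in>set (take m xs). g (f u))"
        then obtain m where m: "Suc m \<in> Ns" "a \<le> (x + g y) + (\<Sum>u\<in>set (take m xs). g (f u))"
          by (auto simp: Ns'_def)
        have "v \<notin> set (take m xs)" using A(6) by (auto dest: in_set_takeD)
        then have "(\<Sum>u\<in>set (take (Suc m) (v#xs)). g ((f(v:=y)) u)) = g y + (\<Sum>u\<in>set (take m xs). g (f u))"
          using s by simp
        then show "f(v:=y) \<in> ?E" using m by (auto intro!: bexI[of _ "Suc m"])
      qed
      then show ?thesis by auto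
    qed
    have "emeasure (measure_pmf (Pi_pmf A d (\<lambda>_. q))) ?E
        = (\<integral>\<^sup>+y. emeasure (measure_pmf (Pi_pmf A' d (\<lambda>_. q))) ((\<lambda>f. f(v:=y)) -` ?E) \<partial>q)"
      unfolding P by simp
    also have "\<dots> \<le> (\<integral>\<^sup>+y. ennreal (exp (l*(x-a)) * B ^ length xs) * ennreal (exp (l * g y)) \<partial>q)"
    proof (rule nn_integral_mono)
      fix y
      have "emeasure (measure_pmf (Pi_pmf A' d (\<lambda>_. q))) ((\<lambda>f. f(v:=y)) -` ?E)
            \<le> ennreal (exp (l*((x + g y)-a)) * B ^ length xs)"
        unfolding seteq by (rule Cons.IH) (use A in auto)
      also have "exp (l*((x + g y)-a)) = exp (l*(x-a)) * exp (l * g y)"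
        by (simp add: algebra_simps flip: exp_add)
      finally show "emeasure (measure_pmf (Pi_pmf A' d (\<lambda>_. q))) ((\<lambda>f. f(v:=y)) -` ?E)
            \<le> ennreal (exp (l*(x-a)) * B ^ length xs) * ennreal (exp (l * g y))"
        using B by (simp add: ennreal_mult' mult.commute mult.left_commute)
    qed
    also have "\<dots> = ennreal (exp (l*(x-a)) * B ^ length xs) * (\<integral>\<^sup>+y. ennreal (exp (l * g y)) \<partial>q)"
      by (rule nn_integral_cmult) simp
    also have "\<dots> \<le> ennreal (exp (l*(x-a)) * B ^ length xs) * ennreal B"
      by (intro mult_left_mono hq) simp
    also have "\<dots> = ennreal (exp (l*(x-a)) * B ^ length (v#xs))"
      using B by (simp add: ennreal_mult'[symmetric] mult.assoc mult.commute)
    finally show ?thesis .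
  qed
qed


lemma exp_type:
  fixes \<sigma> :: real and i :: nat
  shows "measure_pmf.expectation (type_pmf M p) (\<lambda>y. \<sigma> * (if y = i then 1 else 0)) = \<sigma> * pmf (type_pmf M p) i"
proof -
  have "(\<lambda>y. \<sigma> * (if y = i then 1 else 0)) = (\<lambda>y. \<sigma> * indicator {i} y)" by (auto simp: indicator_def fun_eq_iff)
  then show ?thesis by (simp add: measure_pmf_single)
qed

lemma hoeff_type:
  assumes p_pos: "\<And>i. i \<in> {1..M} \<Longrightarrow> p i > 0" and p_sum: "(\<Sum>i=1..M. p i) = 1"
    and i: "i \<in> {1..M}" and l: "l > 0" and s: "\<sigma> = 1 \<or> \<sigma> = -1"
  shows "(\<integral>\<^sup>+y. ennreal (exp (l * (\<sigma> * ((if y = i then 1 else 0) - p i)))) \<partial>type_pmf M p)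
         \<le> ennreal (exp (l^2 / 8))"
proof -
  let ?q = "type_pmf M p"
  let ?f = "\<lambda>y. \<sigma> * (if y = i then 1 else 0) :: real"
  interpret interval_bounded_random_variable "measure_pmf ?q" ?f "min 0 \<sigma>" "max 0 \<sigma>"
    by unfold_locales (use s in auto)
  have E: "measure_pmf.expectation ?q ?f = \<sigma> * p i"
    using exp_type[of M p \<sigma> i] pmf_type[OF p_pos p_sum, of i] i by simp
  have H: "(\<integral>\<^sup>+y. ennreal (exp (l * (?f y - measure_pmf.expectation ?q ?f))) \<partial>?q)
     \<le> ennreal (exp (l\<^sup>2 * (max 0 \<sigma> - min 0 \<sigma>)\<^sup>2 / 8))"
    by (rule Hoeffdings_lemma_nn_integral) (rule l)
  have "(max 0 \<sigma> - min 0 \<sigma>)\<^sup>2 = (1::real)" using s by auto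
  then show ?thesis using H unfolding E by (simp add: algebra_simps)
qed

lemma product_append: "List.product (xs @ ys) zs = List.product xs zs @ List.product ys zs"
  by (induction xs) auto

lemma set_take_product:
  "m \<le> n \<Longrightarrow> set (take (m*N) (List.product [0..<n] [0..<N])) = {..<m} \<times> {..<N}"
proof (induction n arbitrary: m)
  case 0
  then show ?case by simp
next
  case (Suc n)
  have eq: "List.product [0..<Suc n] [0..<N] = List.product [0..<n] [0..<N] @ map (Pair n) [0..<N]"
    by (simp add: product_append)
  show ?case
  proof (cases "m = Suc n")
    case True
    have "take (m*N) (List.product [0..<Suc n] [0..<N]) = List.product [0..<Suc n] [0..<N]"
      using True by (simp add: length_product)
    then show ?thesis using True by auto
  next
    case False
    then have "m \<le> n" using Suc.prems by simp
    then have "m * N \<le> n * N" by simp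
    then have "take (m*N) (List.product [0..<Suc n] [0..<N]) = take (m*N) (List.product [0..<n] [0..<N])"
      unfolding eq by (simp add: length_product)
    then show ?thesis using Suc.IH[OF \<open>m \<le> n\<close>] by simp
  qed
qed

lemma shift_sum:
  fixes f :: "int \<Rightarrow> real"
  shows "(\<Sum>j<n. f (int j - int k)) = (\<Sum>j\<in>{- int k..<int n - int k}. f j)"
proof (induction n)
  case 0
  then show ?case by simp
next
  case (Suc n)
  have "{- int k..<int (Suc n) - int k} = insert (int n - int k) {- int k..<int n - int k}"
    by auto
  then show ?case using Suc by simp
qed

lemma neg_bound:
  fixes G :: "int \<Rightarrow> real" and k n :: nat
  assumes k: "k \<ge> 1" and n: "n \<ge> 1" and Gl: "\<And>j. G j \<ge> - e" and Gu: "\<And>j. j \<ge> 0 \<Longrightarrow> G j \<le> e"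
    and s: "\<And>m. 0 < m \<Longrightarrow> m \<le> n \<Longrightarrow> \<bar>\<Sum>j\<in>{- int k..min 0 (int m - int k)}. G j\<bar> < t"
  shows "\<bar>\<Sum>j\<in>{- int k..<min 0 (int n - int k)}. G j\<bar> < t + e"
proof (cases "n > k")
  case True
  then have m: "min 0 (int n - int k) = 0" by simp
  have "{- int k..0} = insert 0 {- int k..<0}" by auto
  then have "(\<Sum>j\<in>{- int k..min 0 (int n - int k)}. G j) = G 0 + (\<Sum>j\<in>{- int k..<0}. G j)"
    unfolding m by simp
  moreover have "\<bar>\<Sum>j\<in>{- int k..min 0 (int n - int k)}. G j\<bar> < t" using s[of n] n by simp
  moreover have "G 0 \<le> e" "G 0 \<ge> -e" using Gu[of 0] Gl[of 0] by auto
  ultimately show ?thesis unfolding m by linarith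
next
  case False
  then have m: "min 0 (int n - int k) = int n - int k" by simp
  have "{- int k..int n - int k} = insert (int n - int k) {- int k..<int n - int k}" using False by auto
  then have eq: "(\<Sum>j\<in>{- int k..min 0 (int n - int k)}. G j) = G (int n - int k) + (\<Sum>j\<in>{- int k..<int n - int k}. G j)"
    unfolding m by simp
  have sn: "\<bar>\<Sum>j\<in>{- int k..min 0 (int n - int k)}. G j\<bar> < t" using s[of n] n by simp
  have up: "(\<Sum>j\<in>{- int k..<int n - int k}. G j) < t + e"
    using eq sn Gl[of "int n - int k"] by linarith
  have lo: "(\<Sum>j\<in>{- int k..<int n - int k}. G j) > - t - e"
  proof (cases "n = 1")
    case True
    have "{- int k..<int n - int k} = {- int k}" using True by auto
    moreover have "t > 0" using sn by linarith
    ultimately show ?thesis using Gl[of "- int k"] by simp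
  next
    case False
    then have n2: "n - 1 > 0" "n - 1 \<le> n" using n by auto
    have "min 0 (int (n-1) - int k) = int n - 1 - int k" using \<open>\<not> n > k\<close> n by auto
    moreover have "{- int k..int n - 1 - int k} = {- int k..<int n - int k}" by auto
    ultimately have "\<bar>\<Sum>j\<in>{- int k..<int n - int k}. G j\<bar> < t"
      using s[OF n2] by simp
    moreover have "e \<ge> 0" using Gl[of 0] Gu[of 0] by simp
    ultimately show ?thesis by linarith
  qed
  show ?thesis unfolding m using up lo by linarith
qed


lemma sum_int_nat: fixes f :: "int \<Rightarrow> real" shows "(\<Sum>j\<in>{0..<int m}. f j) = (\<Sum>j<m. f (int j))"
proof (induction m)
  case 0
  then show ?case by simp
next
  case (Suc m)
  have "{0..<int (Suc m)} = insert (int m) {0..<int m}" by auto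
  then show ?case using Suc by simp
qed

lemma card_as_sum: fixes N :: nat shows "real (card {k. k < N \<and> P k}) = (\<Sum>k<N. if P k then 1 else 0)"
proof -
  have "{k. k < N \<and> P k} = {k\<in>{..<N}. P k}" by auto
  then have "real (card {k. k < N \<and> P k}) = (\<Sum>k\<in>{k\<in>{..<N}. P k}. 1)" by simp
  also have "\<dots> = (\<Sum>k<N. if P k then 1 else 0)" by (rule sum.inter_filter) simp
  finally show ?thesis .
qed

lemma card_le_N: fixes N :: nat shows "card {k. k < N \<and> P k} \<le> N"
proof -
  have "card {k. k < N \<and> P k} \<le> card {..<N}" by (rule card_mono) auto
  then show ?thesis by simp
qed


theorem lemma8p2:
  fixes \<epsilon> T \<theta> \<theta>1 :: real and N nT M :: nat
    and h :: "nat \<Rightarrow> real" and nn :: "nat \<Rightarrow> nat" and p :: "nat \<Rightarrow> real"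
    and init :: "nat \<Rightarrow> int \<Rightarrow> nat"
  assumes eps: "\<epsilon> > 0" and N: "N \<ge> 1"
    and T: "T > 0" and nT: "real nT = T / \<epsilon>"
    and M: "M \<ge> 1"
    and h_pos: "\<And>i. i \<in> {1..M} \<Longrightarrow> h i > 0"
    and h_mono: "\<And>i j. i \<in> {1..M} \<Longrightarrow> j \<in> {1..M} \<Longrightarrow> i < j \<Longrightarrow> h i < h j"
    and h_nn: "\<And>i. i \<in> {1..M} \<Longrightarrow> h i = real (nn i) * \<epsilon>"
    and p_pos: "\<And>i. i \<in> {1..M} \<Longrightarrow> p i > 0"
    and p_sum: "(\<Sum>i=1..M. p i) = 1"
    and \<theta>: "\<theta> > 0" and \<theta>1: "\<theta>1 > 0"
    and init_bound: "\<And>\<omega> i n. \<omega> \<in> set_pmf (arrival_space nT N M p) \<Longrightarrow> i \<in> {1..M} \<Longrightarrow>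
        0 < n \<Longrightarrow> n \<le> nT \<Longrightarrow>
        \<bar>inverse (real N / \<epsilon>) *
          (\<Sum>j\<in>{- int (nn i)..min 0 (int n - int (nn i))}.
             real (Ncount N init \<omega> i j) - p i * real N)\<bar> < \<theta>1"
  shows "measure_pmf.prob (arrival_space nT N M p)
           {\<omega>. (MAX n\<in>{1..nT}. \<bar>Dproc \<epsilon> N M nn init \<omega> n\<bar>) \<ge> real M * \<theta> + real M * \<theta>1}
         \<le> 2 * real M * exp (- (\<theta>^2 / (32 * T * \<epsilon>)))"
proof -
  define c where "c = \<epsilon> / real N"
  have Npos: "real N > 0" using N by simp
  have c_pos: "c > 0" using eps Npos by (simp add: c_def)
  have cinv: "inverse (real N / \<epsilon>) = c" by (simp add: c_def)
  have cN: "c * real N = \<epsilon>" using Npos by (simp add: c_def)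
  have TnT: "T = real nT * \<epsilon>" using nT eps by (simp add: field_simps)
  have nT1: "nT \<ge> 1"
  proof -
    have "real nT > 0" using nT T eps by simp
    then show ?thesis by simp
  qed
  have nn_pos: "nn i \<ge> 1" if "i \<in> {1..M}" for i
  proof -
    have "real (nn i) * \<epsilon> > 0" using h_pos[OF that] h_nn[OF that] by simp
    then have "real (nn i) > 0" using eps by (simp add: zero_less_mult_iff)
    then show ?thesis by simp
  qed
  have p_le1: "p i \<le> 1" if "i \<in> {1..M}" for i
  proof -
    have "p i \<le> (\<Sum>i=1..M. p i)"
      by (rule member_le_sum) (use that p_pos in \<open>auto intro: less_imp_le\<close>)
    then show ?thesis using p_sum by simp
  qed
  let ?P = "arrival_space nT N M p"
  let ?S = "{\<omega>. (MAX n\<in>{1..nT}. \<bar>Dproc \<epsilon> N M nn init \<omega> n\<bar>) \<ge> real M * \<theta> + real M * \<theta>1}"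
  show ?thesis
  proof (cases "\<theta> < 4 * \<epsilon>")
    case True
    have "\<theta>^2 \<le> (4*\<epsilon>)^2" using True \<theta> by (intro power_mono) auto
    also have "\<dots> = 16 * \<epsilon> * \<epsilon>" by (simp add: power2_eq_square)
    also have "\<dots> \<le> 16 * T * \<epsilon>" using nT1 eps unfolding TnT by simp
    finally have "\<theta>^2 / (32 * T * \<epsilon>) \<le> (16 * T * \<epsilon>) / (32 * T * \<epsilon>)"
      using T eps by (intro divide_right_mono) auto
    also have "\<dots> = 1/2" using T eps by simp
    finally have r: "\<theta>^2 / (32 * T * \<epsilon>) \<le> 1/2" .
    have e1: "exp (-1/2) \<le> exp (- (\<theta>^2 / (32 * T * \<epsilon>)))" using r by simp
    have e2: "exp (-1/2::real) \<ge> 1/2" using exp_ge_add_one_self[of "-1/2::real"] by simp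
    have e3: "1/2 \<le> exp (- (\<theta>^2 / (32 * T * \<epsilon>)))" using e1 e2 by linarith
    have "(2::real) * 1 * (1/2) \<le> 2 * real M * exp (- (\<theta>^2 / (32 * T * \<epsilon>)))"
      using M e3 by (intro mult_mono) auto
    moreover have "measure_pmf.prob ?P ?S \<le> 1" by (rule measure_pmf.prob_le_1)
    ultimately show ?thesis by linarith
  next
    case False
    then have eps4: "\<epsilon> \<le> \<theta> / 4" by simp
    define xs where "xs = List.product [0..<nT] [0..<N]"
    define g where "g i \<sigma> y = \<sigma> * ((if y = i then 1 else 0) - p i)" for i :: nat and \<sigma> :: real and y :: nat
    define thr where "thr = 3 * \<theta> / 4 / c"
    define E where "E i \<sigma> = {\<omega>. \<exists>n\<in>(UNIV::nat set). thr \<le> 0 + (\<Sum>u\<in>set (take n xs). g i \<sigma> (\<omega> u))}"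
      for i :: nat and \<sigma> :: real
    define Q where "Q = exp (- (2 * thr^2 / real (nT * N)))"
    have incl: "?S \<inter> set_pmf ?P \<subseteq> (\<Union>i\<in>{1..M}. E i 1 \<union> E i (-1))"
    proof
      fix \<omega> assume \<omega>: "\<omega> \<in> ?S \<inter> set_pmf ?P"
      then have \<omega>P: "\<omega> \<in> set_pmf ?P"
        and \<omega>S: "real M * \<theta> + real M * \<theta>1 \<le> (MAX n\<in>{1..nT}. \<bar>Dproc \<epsilon> N M nn init \<omega> n\<bar>)" by auto
      have "\<exists>n\<in>{1..nT}. real M * \<theta> + real M * \<theta>1 \<le> \<bar>Dproc \<epsilon> N M nn init \<omega> n\<bar>"
        using \<omega>S nT1 by (subst (asm) Max_ge_iff) auto
      then obtain n where n: "n \<in> {1..nT}"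
        and Dn: "real M * \<theta> + real M * \<theta>1 \<le> \<bar>Dproc \<epsilon> N M nn init \<omega> n\<bar>" by blast
      define G where "G i j = c * (real (Ncount N init \<omega> i j) - p i * real N)" for i j
      define R where "R i = c * (\<Sum>u\<in>set (take ((n - nn i) * N) xs). g i 1 (\<omega> u))" for i
      define NG where "NG i = (\<Sum>j\<in>{- int (nn i)..<min 0 (int n - int (nn i))}. G i j)" for i
      have pos: "(\<Sum>j\<in>{0..<int n - int (nn i)}. G i j) = R i" for i
      proof -
        define m where "m = n - nn i"
        have m_le: "m \<le> nT" using n unfolding m_def by (auto intro: le_trans[OF diff_le_self])
        have "{0..<int n - int (nn i)} = {0..<int m}" by (auto simp: m_def)
        then have "(\<Sum>j\<in>{0..<int n - int (nn i)}. G i j) = (\<Sum>j<m. G i (int j))"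
          by (simp add: sum_int_nat)
        also have "\<dots> = (\<Sum>j<m. c * (\<Sum>k<N. g i 1 (\<omega> (j, k))))"
        proof (rule sum.cong[OF refl])
          fix j
          have "G i (int j) = c * (real (card {k. k < N \<and> \<omega> (j, k) = i}) - p i * real N)"
            by (simp add: G_def Ncount_def)
          also have "\<dots> = c * (\<Sum>k<N. g i 1 (\<omega> (j, k)))"
            by (simp add: card_as_sum g_def sum_subtractf)
          finally show "G i (int j) = c * (\<Sum>k<N. g i 1 (\<omega> (j, k)))" .
        qed
        also have "\<dots> = c * (\<Sum>(j,k)\<in>{..<m} \<times> {..<N}. g i 1 (\<omega> (j, k)))"
          by (simp add: sum_distrib_left sum.cartesian_product)
        also have "\<dots> = c * (\<Sum>u\<in>{..<m} \<times> {..<N}. g i 1 (\<omega> u))"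
          by (simp add: case_prod_beta')
        also have "{..<m} \<times> {..<N} = set (take (m * N) xs)"
          unfolding xs_def by (rule set_take_product[OF m_le, symmetric])
        finally show ?thesis by (simp add: R_def m_def)
      qed
      have inner: "- real N + (\<Sum>i=1..M. real (Ncount N init \<omega> i (int j - int (nn i))))
          = (\<Sum>i=1..M. real (Ncount N init \<omega> i (int j - int (nn i))) - p i * real N)" for j
      proof -
        have "(\<Sum>i=1..M. p i * real N) = real N" using p_sum by (simp add: sum_distrib_right[symmetric])
        then show ?thesis by (simp add: sum_subtractf)
      qed
      have "Dproc \<epsilon> N M nn init \<omega> n
          = c * (\<Sum>j<n. \<Sum>i=1..M. real (Ncount N init \<omega> i (int j - int (nn i))) - p i * real N)"
        unfolding Dproc_def cinv inner by (rule refl)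
      also have "\<dots> = (\<Sum>j<n. \<Sum>i=1..M. G i (int j - int (nn i)))"
        by (simp add: G_def sum_distrib_left)
      also have "\<dots> = (\<Sum>i=1..M. \<Sum>j<n. G i (int j - int (nn i)))"
        by (rule sum.swap)
      also have "\<dots> = (\<Sum>i=1..M. \<Sum>j\<in>{- int (nn i)..<int n - int (nn i)}. G i j)"
        by (simp add: shift_sum)
      also have "\<dots> = (\<Sum>i=1..M. NG i + R i)"
      proof (rule sum.cong[OF refl])
        fix i
        have "{- int (nn i)..<int n - int (nn i)} = {- int (nn i)..<min 0 (int n - int (nn i))} \<union> {0..<int n - int (nn i)}"
          by auto
        then have "(\<Sum>j\<in>{- int (nn i)..<int n - int (nn i)}. G i j)
            = (\<Sum>j\<in>{- int (nn i)..<min 0 (int n - int (nn i))}. G i j) + (\<Sum>j\<in>{0..<int n - int (nn i)}. G i j)"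
          by (simp add: sum.union_disjoint)
        then show "(\<Sum>j\<in>{- int (nn i)..<int n - int (nn i)}. G i j) = NG i + R i"
          by (simp add: NG_def pos)
      qed
      finally have Ddec: "Dproc \<epsilon> N M nn init \<omega> n = (\<Sum>i=1..M. NG i + R i)" .
      have negb: "\<bar>NG i\<bar> < \<theta>1 + \<epsilon>" if i: "i \<in> {1..M}" for i
        unfolding NG_def
      proof (rule neg_bound)
        show "1 \<le> nn i" by (rule nn_pos[OF i])
        show "1 \<le> n" using n by simp
        have Geq: "G i j = c * real (Ncount N init \<omega> i j) - p i * \<epsilon>" for j
          by (simp add: G_def cN[symmetric] algebra_simps)
        show "- \<epsilon> \<le> G i j" for j
        proof -
          have "c * real (Ncount N init \<omega> i j) \<ge> 0" using c_pos by simp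
          moreover have "p i * \<epsilon> \<le> \<epsilon>" using p_le1[OF i] eps by simp
          ultimately show ?thesis unfolding Geq by linarith
        qed
        show "G i j \<le> \<epsilon>" if j: "0 \<le> j" for j
        proof -
          have "Ncount N init \<omega> i j \<le> N"
            using j by (simp add: Ncount_def card_le_N)
          then have "c * real (Ncount N init \<omega> i j) \<le> c * real N"
            using c_pos by (intro mult_left_mono) auto
          moreover have "p i * \<epsilon> \<ge> 0" using p_pos[OF i] eps by simp
          ultimately show ?thesis unfolding Geq cN by linarith
        qed
        show "\<bar>\<Sum>j\<in>{- int (nn i)..min 0 (int m - int (nn i))}. G i j\<bar> < \<theta>1"
          if "0 < m" "m \<le> n" for m
        proof -
          have "m \<le> nT" using that n by simp
          then have "\<bar>c * (\<Sum>j\<in>{- int (nn i)..min 0 (int m - int (nn i))}.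
                 real (Ncount N init \<omega> i j) - p i * real N)\<bar> < \<theta>1"
            using init_bound[OF \<omega>P i \<open>0 < m\<close>] unfolding cinv by blast
          then show ?thesis by (simp add: G_def sum_distrib_left)
        qed
      qed
      have "\<exists>i\<in>{1..M}. \<bar>R i\<bar> > 3 * \<theta> / 4"
      proof (rule ccontr)
        assume "\<not> (\<exists>i\<in>{1..M}. \<bar>R i\<bar> > 3 * \<theta> / 4)"
        then have Rb: "\<bar>R i\<bar> \<le> 3 * \<theta> / 4" if "i \<in> {1..M}" for i
          using that by (simp add: not_less)
        have "\<bar>Dproc \<epsilon> N M nn init \<omega> n\<bar> \<le> (\<Sum>i=1..M. \<bar>NG i + R i\<bar>)"
          unfolding Ddec by (rule sum_abs)
        also have "\<dots> \<le> (\<Sum>i=1..M. \<bar>NG i\<bar> + \<bar>R i\<bar>)"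
          by (rule sum_mono) (rule abs_triangle_ineq)
        also have "\<dots> < (\<Sum>i=1..M. \<theta>1 + \<epsilon> + 3 * \<theta> / 4)"
        proof (rule sum_strict_mono)
          show "finite {1..M}" by simp
          show "{1..M} \<noteq> {}" using M by simp
          fix i assume "i \<in> {1..M}"
          then show "\<bar>NG i\<bar> + \<bar>R i\<bar> < \<theta>1 + \<epsilon> + 3 * \<theta> / 4"
            using negb Rb by (meson add_less_le_mono)
        qed
        also have "\<dots> = real M * (\<theta>1 + \<epsilon> + 3 * \<theta> / 4)" by simp
        also have "\<dots> \<le> real M * (\<theta>1 + \<theta>)"
          using eps4 by (intro mult_left_mono) auto
        finally show False using Dn by (simp add: algebra_simps)
      qed
      then obtain i where i: "i \<in> {1..M}" and Ri: "\<bar>R i\<bar> > 3 * \<theta> / 4" by blast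
      define S where "S = (\<Sum>u\<in>set (take ((n - nn i) * N) xs). g i 1 (\<omega> u))"
      have S': "(\<Sum>u\<in>set (take ((n - nn i) * N) xs). g i (-1) (\<omega> u)) = - S"
        unfolding S_def g_def by (simp add: sum_negf[symmetric])
      have RS: "R i = c * S" by (simp add: R_def S_def)
      show "\<omega> \<in> (\<Union>i\<in>{1..M}. E i 1 \<union> E i (-1))"
      proof (cases "R i > 0")
        case True
        then have "3 * \<theta> / 4 < S * c" using Ri RS by (simp add: mult.commute)
        then have "thr \<le> S" using c_pos by (simp add: thr_def field_simps)
        then have "\<omega> \<in> E i 1" unfolding E_def S_def by auto
        then show ?thesis using i by blast
      next
        case False
        then have "3 * \<theta> / 4 < (- S) * c" using Ri RS by (simp add: mult.commute)
        then have "thr \<le> - S" using c_pos by (simp add: thr_def field_simps)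
        then have "\<omega> \<in> E i (-1)" unfolding E_def S'[symmetric] by auto
        then show ?thesis using i by blast
      qed
    qed
    have thr_eq: "thr = 3 * \<theta> * real N / (4 * \<epsilon>)"
      using eps Npos by (simp add: thr_def c_def field_simps)
    have thr_pos: "thr > 0" using thr_eq \<theta> eps Npos by simp
    define L where "L = nT * N"
    have L_pos: "real L > 0" using nT1 N by (simp add: L_def)
    define l where "l = 4 * thr / real L"
    have l_pos: "l > 0" using thr_pos L_pos by (simp add: l_def)
    have len: "length xs = L" by (simp add: xs_def L_def length_product)
    have bnd: "measure_pmf.prob ?P (E i \<sigma>) \<le> Q" if i: "i \<in> {1..M}" and s: "\<sigma> = 1 \<or> \<sigma> = -1" for i \<sigma>
    proof -
      have em: "emeasure (measure_pmf ?P) (E i \<sigma>) \<le> ennreal (exp (l*(0-thr)) * exp (l^2/8) ^ length xs)"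
        unfolding E_def arrival_space_def
      proof (rule maxineq)
        show "distinct xs" by (simp add: xs_def distinct_product)
        show "set xs \<subseteq> {0..<nT} \<times> {0..<N}" by (simp add: xs_def)
        show "finite ({0..<nT} \<times> {0..<N})" by simp
        show "0 \<le> l" using l_pos by simp
        show "1 \<le> exp (l^2/8)" by simp
        show "(\<integral>\<^sup>+y. ennreal (exp (l * g i \<sigma> y)) \<partial>type_pmf M p) \<le> ennreal (exp (l^2/8))"
          unfolding g_def by (rule hoeff_type[OF p_pos p_sum i l_pos s])
      qed
      have "exp (l*(0-thr)) * exp (l^2/8) ^ length xs = exp (- l * thr + real L * (l^2/8))"
      proof -
        have "exp (l^2/8) ^ L = exp (real L * (l^2/8))" by (rule exp_of_nat_mult[symmetric])
        then have "exp (l*(0-thr)) * exp (l^2/8) ^ length xs = exp (- l * thr) * exp (real L * (l^2/8))"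
          unfolding len by simp
        also have "\<dots> = exp (- l * thr + real L * (l^2/8))" by (rule exp_add[symmetric])
        finally show ?thesis .
      qed
      also have "- l * thr + real L * (l^2/8) = - (2 * thr^2 / real (nT * N))"
        using L_pos unfolding l_def L_def by (simp add: field_simps power2_eq_square)
      finally have "exp (l*(0-thr)) * exp (l^2/8) ^ length xs = Q" by (simp add: Q_def)
      with em have "emeasure (measure_pmf ?P) (E i \<sigma>) \<le> ennreal Q" by simp
      then show ?thesis
        by (simp add: measure_pmf.emeasure_eq_measure Q_def)
    qed
    have Qb: "Q \<le> exp (- (\<theta>^2 / (32 * T * \<epsilon>)))"
    proof -
      define K where "K = \<theta>^2 / (\<epsilon>^2 * real nT)"
      have K_pos: "K > 0" using \<theta> eps nT1 by (simp add: K_def)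
      have "2 * thr^2 / real (nT * N) = K * (9 * real N / 8)"
        using eps Npos nT1 unfolding thr_eq K_def by (simp add: field_simps power2_eq_square)
      moreover have "\<theta>^2 / (32 * T * \<epsilon>) = K * (1/32)"
        using eps nT1 unfolding TnT K_def by (simp add: field_simps power2_eq_square)
      moreover have "K * (1/32) \<le> K * (9 * real N / 8)"
        using K_pos N by (intro mult_left_mono) auto
      ultimately show ?thesis unfolding Q_def by simp
    qed
    have "measure_pmf.prob ?P ?S = measure_pmf.prob ?P (?S \<inter> set_pmf ?P)"
      by (simp add: measure_Int_set_pmf)
    also have "\<dots> \<le> measure_pmf.prob ?P (\<Union>i\<in>{1..M}. E i 1 \<union> E i (-1))"
      by (rule measure_pmf.finite_measure_mono[OF incl]) simp
    also have "\<dots> \<le> (\<Sum>i\<in>{1..M}. measure_pmf.prob ?P (E i 1 \<union> E i (-1)))"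
      by (rule measure_pmf.finite_measure_subadditive_finite) auto
    also have "\<dots> \<le> (\<Sum>i\<in>{1..M}. 2 * Q)"
    proof (rule sum_mono)
      fix i assume i: "i \<in> {1..M}"
      have "measure_pmf.prob ?P (E i 1 \<union> E i (-1)) \<le> measure_pmf.prob ?P (E i 1) + measure_pmf.prob ?P (E i (-1))"
        by (rule measure_Un_le) auto
      also have "\<dots> \<le> Q + Q" using bnd[OF i] by (intro add_mono) auto
      finally show "measure_pmf.prob ?P (E i 1 \<union> E i (-1)) \<le> 2 * Q" by simp
    qed
    also have "\<dots> = 2 * real M * Q" by simp
    also have "\<dots> \<le> 2 * real M * exp (- (\<theta>^2 / (32 * T * \<epsilon>)))"
      using Qb by (intro mult_left_mono) auto
    finally show ?thesis .
  qed
qed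

end
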